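(* Let $\Bbbk$ be an algebraically closed field of characteristic zero and let $\pi$ be a pyramid with row lengths $p_1\le\dots\le p_{m+n}$ (set $p_0=0$), with $|i|\in\{0,1\}$ the label of row $i$. For $2\le i\le m+n$ let $s_{i,i-1}$ be the left indentation of row $i-1$ relative to row $i$. Given $a_i^{(r)}\in\Bbbk$ for $1\le i\le m+n$ and $1\le r\le p_i-p_{i-1}$, there exist $b_{i,j}\in\Bbbk$ for $1\le i\le m+n$, $1\le j\le p_i$, such that $$b_{i,s_{i,i-1}+r}=b_{i-1,r}\quad\text{for }1\le r\le p_{i-1},$$ $$e_r\big((-1)^{|i|}b_{i,1},\dots,(-1)^{|i|}b_{i,p_i}\big)=(-1)^{r|i|}a_i^{(r)}\quad\text{for }1\le r\le p_i-p_{i-1},$$ where $e_r$ is the $r$-th elementary symmetric polynomial.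
   Context: A pyramid $\pi$ with row lengths $p_1\le\dots\le p_{m+n}$ is a diagram with rows $1,\dots,m+n$ numbered top to bottom, row $i$ consisting of $p_i$ consecutive boxes, such that every box not in the bottom row lies directly above a box of the row beneath. Each row is labelled "$+$" ($|i|=0$) or "$-$" ($|i|=1$), with $m$ rows of the first kind and $n$ of the second. The left indentation $s_{i,i-1}$ is the number of boxes of row $i$ lying strictly to the left of the leftmost box of row $i-1$. *)

theory Defs
  imports "HOL-Computational_Algebra.Polynomial"
begin

definition alg_closed_type :: "'a::field itself \<Rightarrow> bool" where
  "alg_closed_type _ \<longleftrightarrow> (\<forall>q :: 'a poly. 0 < degree q \<longrightarrow> (\<exists>x. poly q x = 0))"

definition esym :: "nat \<Rightarrow> (nat \<Rightarrow> 'a::comm_ring_1) \<Rightarrow> nat \<Rightarrow> 'a" where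
  "esym r x k = (\<Sum>S \<in> {S. S \<subseteq> {1..k} \<and> card S = r}. \<Prod>j\<in>S. x j)"

text \<open>A pyramid with rows 1..N (top to bottom), row i of length p i occupying the
  columns lft i + 1, ..., lft i + p i. Each box of row i-1 lies above a box of row i.\<close>
definition is_pyramid :: "nat \<Rightarrow> (nat \<Rightarrow> nat) \<Rightarrow> (nat \<Rightarrow> int) \<Rightarrow> bool" where
  "is_pyramid N p lft \<longleftrightarrow>
     (\<forall>i\<in>{1..N}. 0 < p i) \<and>
     (\<forall>i\<in>{2..N}. p (i-1) \<le> p i \<and> lft i \<le> lft (i-1) \<and>
        lft (i-1) + int (p (i-1)) \<le> lft i + int (p i))"

definition left_indent :: "(nat \<Rightarrow> int) \<Rightarrow> nat \<Rightarrow> nat" where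
  "left_indent lft i = nat (lft (i-1) - lft i)"

definition rowlen0 :: "(nat \<Rightarrow> nat) \<Rightarrow> nat \<Rightarrow> nat" where
  "rowlen0 p i = (if i = 0 then 0 else p i)"

end

theory Submission imports Defs begin

lemma prod_monom1:
  fixes x :: "nat \<Rightarrow> 'a::comm_ring_1"
  shows "finite B \<Longrightarrow> (\<Prod>j\<in>B. monom (x j) 1) = monom (\<Prod>j\<in>B. x j) (card B)"
  by (induction B rule: finite_induct) (auto simp: mult_monom)

lemma esym_coeff:
  fixes x :: "nat \<Rightarrow> 'a::comm_ring_1"
  shows "esym r x P = coeff (\<Prod>j\<in>{1..P}. [:1, x j:]) r"
proof -
  have e: "\<And>j. [:1, x j:] = monom (x j) 1 + 1"
    by (auto intro!: poly_eqI simp: coeff_monom coeff_pCons split: nat.split)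
  have "(\<Prod>j\<in>{1..P}. [:1, x j:]) = (\<Sum>B\<in>Pow {1..P}. monom (\<Prod>j\<in>B. x j) (card B))"
    unfolding e
    apply (subst prod_add, simp)
    apply (rule sum.cong, simp)
    using prod_monom1 finite_subset by (metis Pow_iff finite_atLeastAtMost mult_1_right prod.neutral_const)
  hence "coeff (\<Prod>j\<in>{1..P}. [:1, x j:]) r = (\<Sum>B\<in>Pow {1..P}. if card B = r then (\<Prod>j\<in>B. x j) else 0)"
    by (simp add: coeff_sum coeff_monom)
  also have "\<dots> = (\<Sum>B\<in>{B\<in>Pow {1..P}. card B = r}. (\<Prod>j\<in>B. x j))"
    by (subst sum.inter_filter[symmetric]) auto
  also have "\<dots> = esym r x P" unfolding esym_def by (rule sum.cong) auto
  finally show ?thesis by simp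
qed

lemma esym_scale:
  fixes x :: "nat \<Rightarrow> 'a::comm_ring_1"
  shows "esym r (\<lambda>j. u * x j) P = u ^ r * esym r x P"
  unfolding esym_def by (auto simp: sum_distrib_left prod.distrib intro!: sum.cong)

lemma factor:
  fixes Y :: "'k::field poly"
  assumes closed: "alg_closed_type TYPE('k)"
  shows "finite F \<Longrightarrow> card F = k \<Longrightarrow> degree Y \<le> k \<Longrightarrow> coeff Y 0 = 1 \<Longrightarrow> \<exists>y. Y = (\<Prod>j\<in>F. [:1, y j:])"
proof (induction k arbitrary: F Y)
  case 0
  then have "F = {}" by auto
  moreover have "Y = 1" using 0 by (metis One_nat_def degree_0_id le_zero_eq one_pCons)
  ultimately show ?case by auto
next
  case (Suc k)
  then obtain j0 where j0: "j0 \<in> F" by (metis card.empty empty_iff nat.distinct(1) ex_in_conv)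
  let ?F = "F - {j0}"
  have cF: "card ?F = k" "finite ?F" using Suc.prems j0 by auto
  show ?case
  proof (cases "degree Y \<le> k")
    case True
    then obtain y where y: "Y = (\<Prod>j\<in>?F. [:1, y j:])" using Suc.IH[OF cF(2,1)] Suc.prems by blast
    have "(\<Prod>j\<in>F. [:1, (y(j0 := 0)) j:]) = [:1, 0:] * (\<Prod>j\<in>?F. [:1, (y(j0 := 0)) j:])"
      using Suc.prems(1) j0 by (simp add: prod.remove)
    also have "\<dots> = Y" using y by (auto intro!: prod.cong)
    finally show ?thesis by metis
  next
    case False
    hence dY: "degree Y = Suc k" using Suc.prems by simp
    then obtain z where z: "poly Y z = 0" using closed unfolding alg_closed_type_def by (metis zero_less_Suc)
    have z0: "z \<noteq> 0" using z Suc.prems(4) by (auto simp: poly_0_coeff_0)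
    obtain Q where Q: "Y = [:-z, 1:] * Q" using z poly_eq_0_iff_dvd by (metis dvdE)
    have lin: "[:-z, 1:] = smult (-z) [:1, -1/z:]" using z0 by simp
    define Q' where "Q' = smult (-z) Q"
    have YQ: "Y = [:1, -1/z:] * Q'" unfolding Q'_def using Q lin by (simp add: mult.commute)
    have Q0: "Q \<noteq> 0" using Q dY by auto
    have "degree Y = degree [:-z, 1:] + degree Q" unfolding Q
      by (rule degree_mult_eq) (use Q0 in auto)
    hence dQ: "degree Q' \<le> k" using dY z0 unfolding Q'_def by simp
    have cQ: "coeff Q' 0 = 1" using Suc.prems(4) YQ by (simp add: coeff_mult)
    obtain y where y: "Q' = (\<Prod>j\<in>?F. [:1, y j:])" using Suc.IH[OF cF(2,1) dQ cQ] by blast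
    have "(\<Prod>j\<in>F. [:1, (y(j0 := -1/z)) j:]) = [:1, -1/z:] * (\<Prod>j\<in>?F. [:1, (y(j0 := -1/z)) j:])"
      using Suc.prems(1) j0 by (simp add: prod.remove)
    also have "\<dots> = Y" using y YQ by (auto intro!: prod.cong)
    finally show ?thesis by metis
  qed
qed

lemma solveY:
  fixes C :: "'k::field poly" and a :: "nat \<Rightarrow> 'k"
  assumes "coeff C 0 = 1"
  shows "\<exists>Y. degree Y \<le> k \<and> coeff Y 0 = 1 \<and> (\<forall>r\<in>{1..k}. coeff (C * Y) r = a r)"
proof (induction k)
  case 0
  show ?case by (rule exI[of _ 1]) auto
next
  case (Suc k)
  then obtain Y where Y: "degree Y \<le> k" "coeff Y 0 = 1" "\<forall>r\<in>{1..k}. coeff (C * Y) r = a r" by blast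
  define d where "d = a (Suc k) - coeff (C * Y) (Suc k)"
  define Y' where "Y' = Y + monom d (Suc k)"
  have "degree Y' \<le> Suc k" unfolding Y'_def using Y(1)
    by (meson degree_add_le degree_monom_le le_SucI)
  moreover have "coeff Y' 0 = 1" using Y(2) by (simp add: Y'_def)
  moreover have "\<forall>r\<in>{1..Suc k}. coeff (C * Y') r = a r"
  proof
    fix r assume r: "r \<in> {1..Suc k}"
    have "C * Y' = C * Y + monom d (Suc k) * C" unfolding Y'_def by (simp add: algebra_simps)
    hence "coeff (C * Y') r = coeff (C * Y) r + (if r < Suc k then 0 else d * coeff C (r - Suc k))"
      by (simp add: coeff_monom_mult)
    then show "coeff (C * Y') r = a r" using r Y(3) assms by (cases "r = Suc k") (auto simp: d_def)
  qed
  ultimately show ?case by blast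
qed

lemma row_exists:
  fixes c a :: "nat \<Rightarrow> 'k::field"
  assumes closed: "alg_closed_type TYPE('k)" and sq: "s + q \<le> P"
  shows "\<exists>x. (\<forall>r\<in>{1..q}. x (s+r) = c r) \<and> (\<forall>r\<in>{1..P-q}. esym r x P = a r)"
proof -
  define Fx where "Fx = {s+1..s+q}"
  define F where "F = {1..P} - Fx"
  define C where "C = (\<Prod>j\<in>Fx. [:1, c (j - s):])"
  have C0: "coeff C 0 = 1" unfolding C_def poly_0_coeff_0[symmetric] by (simp add: poly_prod)
  obtain Y where Y: "degree Y \<le> P - q" "coeff Y 0 = 1" "\<forall>r\<in>{1..P-q}. coeff (C * Y) r = a r"
    using solveY[OF C0] by blast
  have FxP: "Fx \<subseteq> {1..P}" using sq unfolding Fx_def by auto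
  have cF: "card F = P - q" unfolding F_def using FxP by (simp add: card_Diff_subset Fx_def)
  obtain y where y: "Y = (\<Prod>j\<in>F. [:1, y j:])"
    using factor[OF closed _ cF Y(1) Y(2)] F_def by blast
  define x where "x = (\<lambda>j. if j \<in> Fx then c (j - s) else y j)"
  have "(\<Prod>j\<in>{1..P}. [:1, x j:]) = (\<Prod>j\<in>Fx. [:1, x j:]) * (\<Prod>j\<in>F. [:1, x j:])"
    unfolding F_def using FxP by (metis finite_atLeastAtMost prod.subset_diff mult.commute)
  also have "\<dots> = C * Y"
  proof -
    have "(\<Prod>j\<in>Fx. [:1, x j:]) = C" unfolding C_def x_def by (rule prod.cong) auto
    moreover have "(\<Prod>j\<in>F. [:1, x j:]) = Y" unfolding y x_def F_def by (rule prod.cong) auto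
    ultimately show ?thesis by simp
  qed
  finally have prodeq: "(\<Prod>j\<in>{1..P}. [:1, x j:]) = C * Y" .
  show ?thesis
  proof (intro exI conjI ballI)
    fix r assume "r \<in> {1..q}" thus "x (s + r) = c r" unfolding x_def Fx_def by auto
  next
    fix r assume "r \<in> {1..P-q}" thus "esym r x P = a r" using Y(3) prodeq by (simp add: esym_coeff)
  qed
qed

theorem mainTheorem9:
  fixes m n :: nat
    and p :: "nat \<Rightarrow> nat" and lft :: "nat \<Rightarrow> int" and lab :: "nat \<Rightarrow> nat"
    and a :: "nat \<Rightarrow> nat \<Rightarrow> 'k::field_char_0"
  assumes closed: "alg_closed_type TYPE('k)"
    and pyr: "is_pyramid (m+n) p lft"
    and labs: "\<forall>i\<in>{1..m+n}. lab i \<in> {0,1}"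
    and cnt0: "card {i\<in>{1..m+n}. lab i = 0} = m"
    and cnt1: "card {i\<in>{1..m+n}. lab i = 1} = n"
  shows "\<exists>b :: nat \<Rightarrow> nat \<Rightarrow> 'k.
     (\<forall>i\<in>{2..m+n}. \<forall>r\<in>{1..p (i-1)}. b i (left_indent lft i + r) = b (i-1) r) \<and>
     (\<forall>i\<in>{1..m+n}. \<forall>r\<in>{1..p i - rowlen0 p (i-1)}.
        esym r (\<lambda>j. (-1)^(lab i) * b i j) (p i) = (-1)^(r * lab i) * a i r)"
proof -
  have main: "N \<le> m+n \<Longrightarrow> \<exists>b :: nat \<Rightarrow> nat \<Rightarrow> 'k.
     (\<forall>i\<in>{2..N}. \<forall>r\<in>{1..p (i-1)}. b i (left_indent lft i + r) = b (i-1) r) \<and>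
     (\<forall>i\<in>{1..N}. \<forall>r\<in>{1..p i - rowlen0 p (i-1)}. esym r (b i) (p i) = a i r)" for N
  proof (induction N)
    case 0
    show ?case by auto
  next
    case (Suc N)
    then obtain b where b:
      "\<forall>i\<in>{2..N}. \<forall>r\<in>{1..p (i-1)}. b i (left_indent lft i + r) = b (i-1) r"
      "\<forall>i\<in>{1..N}. \<forall>r\<in>{1..p i - rowlen0 p (i-1)}. esym r (b i) (p i) = a i r" by auto
    define s0 where "s0 = (if N = 0 then 0 else left_indent lft (Suc N))"
    have sq: "s0 + rowlen0 p N \<le> p (Suc N)"
    proof (cases "N = 0")
      case True thus ?thesis by (simp add: rowlen0_def s0_def)
    next
      case False
      hence "Suc N \<in> {2..m+n}" using Suc.prems by auto
      hence "lft (Suc N) \<le> lft N" "lft N + int (p N) \<le> lft (Suc N) + int (p (Suc N))"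
        using pyr unfolding is_pyramid_def by (metis diff_Suc_1)+
      thus ?thesis using False by (simp add: rowlen0_def left_indent_def s0_def)
    qed
    obtain x where x: "\<forall>r\<in>{1..rowlen0 p N}. x (s0 + r) = b N r"
      "\<forall>r\<in>{1..p (Suc N) - rowlen0 p N}. esym r x (p (Suc N)) = a (Suc N) r"
      using row_exists[OF closed sq] by blast
    define b' where "b' = b(Suc N := x)"
    show ?case
    proof (intro exI[of _ b'] conjI ballI)
      fix i r assume i: "i \<in> {2..Suc N}" and r: "r \<in> {1..p (i-1)}"
      show "b' i (left_indent lft i + r) = b' (i-1) r"
      proof (cases "i = Suc N")
        case True thus ?thesis using i r x(1) by (auto simp: b'_def rowlen0_def s0_def)
      next
        case False thus ?thesis using i r b(1) by (auto simp: b'_def)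
      qed
    next
      fix i r assume i: "i \<in> {1..Suc N}" and r: "r \<in> {1..p i - rowlen0 p (i-1)}"
      show "esym r (b' i) (p i) = a i r"
      proof (cases "i = Suc N")
        case True thus ?thesis using i r x(2) by (auto simp: b'_def)
      next
        case False thus ?thesis using i r b(2) by (auto simp: b'_def)
      qed
    qed
  qed
  obtain b where b:
      "\<forall>i\<in>{2..m+n}. \<forall>r\<in>{1..p (i-1)}. b i (left_indent lft i + r) = b (i-1) r"
      "\<forall>i\<in>{1..m+n}. \<forall>r\<in>{1..p i - rowlen0 p (i-1)}. esym r (b i) (p i) = a i r"
    using main[of "m+n"] by auto
  show ?thesis
  proof (rule exI[of _ b], intro conjI ballI)
    fix i r assume "i \<in> {2..m+n}" "r \<in> {1..p (i-1)}"
    thus "b i (left_indent lft i + r) = b (i-1) r" using b(1) by blast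
  next
    fix i r assume i: "i \<in> {1..m+n}" and r: "r \<in> {1..p i - rowlen0 p (i-1)}"
    have "esym r (\<lambda>j. (-1)^(lab i) * b i j) (p i) = ((-1)^(lab i))^r * esym r (b i) (p i)"
      by (rule esym_scale)
    also have "\<dots> = (-1)^(r * lab i) * a i r" using b(2) i r
      by (simp add: power_mult[symmetric] mult.commute)
    finally show "esym r (\<lambda>j. (-1)^(lab i) * b i j) (p i) = (-1)^(r * lab i) * a i r" .
  qed
qed

end
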